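(* Consider an instance of the bicriteria asymmetric traveling salesman problem (bi-ATSP) with tour set $\mathcal{C}$, vector criterion $D=(D_1,D_2)$, outcome set $\mathcal{D}=D(\mathcal{C})$, and $\mathcal{D}_i=D_i(\mathcal{C})$ for $i=1,2$. Suppose that $$P(\mathcal{D}) = \{ (y_1, y_2): y_2 = a - k y_1,\ y_1 \in \mathcal{D}_1,\ y_2 \in \mathcal{D}_2 \},$$ where $a>0$ and $k>0$ are constants. Suppose the 2nd criterion $D_2$ is more important than the 1st criterion $D_1$ with coefficient of relative importance $\theta''\in(0,1)$, and let $\hat{P}(\mathcal{D})$ be the corresponding reduced Pareto set (reduction with $i=2$, $j=1$, $\theta=\theta''$). If $\theta'' \geqslant 1/(k+1)$, then $\hat{P}(\mathcal{D})$ consists of exactly one element. If $\theta'' < 1/(k+1)$, then $\hat{P}(\mathcal{D}) = P(\mathcal{D})$.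
   Context: Bi-ATSP: given a complete directed graph $G=(V,E)$ on $n$ vertices, each arc $e\in E$ carries a weight vector $d(e)=(d_1(e),d_2(e))$ of positive numbers. $\mathcal{C}$ is the set of all $(n-1)!$ Hamiltonian circuits (tours) of $G$, and for a tour $C$, $D(C)=(D_1(C),D_2(C))$ with $D_j(C)=\sum_{e\in C} d_j(e)$. For vectors $y^*,y$, write $y^*\leq y$ if $y^*\neq y$ and $y^*_s\leqslant y_s$ for every coordinate $s$ (Pareto relation). For a vector criterion $F$ on $\mathcal{C}$, the set of pareto-optimal tours is $P_F(\mathcal{C})=\{C\in\mathcal{C}: \nexists C^*\in\mathcal{C},\ F(C^* )\leq F(C)\}$. The Pareto set is $P(\mathcal{D})=\{y\in\mathcal{D}: \nexists y^*\in\mathcal{D},\ y^*\leq y\}$. Reduced Pareto set: if criterion $D_i$ is declared more important than criterion $D_j$ ($\{i,j\}=\{1,2\}$) with coefficient of relative importance $\theta\in(0,1)$, define the new criterion $\hat D$ by $\hat D_j=\theta D_i+(1-\theta)D_j$ and $\hat D_i=D_i$, and set $\hat{P}(\mathcal{D})=D(P_{\hat D}(\mathcal{C}))$ (a subset of $P(\mathcal{D})$). *)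

theory Defs
  imports Complex_Main
begin

text \<open>A Hamiltonian circuit (tour) is represented by its arc set: for a list vs enumerating all
  vertices without repetition, the arcs (vs!0,vs!1), ..., (vs!(n-2),vs!(n-1)), (vs!(n-1),vs!0).\<close>

definition cyc_arcs :: "nat list \<Rightarrow> (nat \<times> nat) list" where
  "cyc_arcs vs = zip vs (tl vs @ [hd vs])"

definition tours :: "nat \<Rightarrow> (nat \<times> nat) set set" where
  "tours n = {set (cyc_arcs vs) | vs. distinct vs \<and> set vs = {..<n}}"

definition Dvec :: "(nat \<times> nat \<Rightarrow> real \<times> real) \<Rightarrow> (nat \<times> nat) set \<Rightarrow> real \<times> real" where
  "Dvec d C = ((\<Sum>e\<in>C. fst (d e)), (\<Sum>e\<in>C. snd (d e)))"

definition pareto_le :: "real \<times> real \<Rightarrow> real \<times> real \<Rightarrow> bool" where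
  "pareto_le y' y \<longleftrightarrow> y' \<noteq> y \<and> fst y' \<le> fst y \<and> snd y' \<le> snd y"

definition pareto_tours :: "('c \<Rightarrow> real \<times> real) \<Rightarrow> 'c set \<Rightarrow> 'c set" where
  "pareto_tours F Cs = {C \<in> Cs. \<not> (\<exists>C'\<in>Cs. pareto_le (F C') (F C))}"

definition pareto_set :: "(real \<times> real) set \<Rightarrow> (real \<times> real) set" where
  "pareto_set Ys = {y \<in> Ys. \<not> (\<exists>y'\<in>Ys. pareto_le y' y)}"

text \<open>Reduced criterion when criterion i is more important than criterion j ({i,j} = {1,2})
  with coefficient theta: \<open>D^_j = \<theta> D_i + (1-\<theta>) D_j\<close>, \<open>D^_i = D_i\<close>.\<close>
definition reduced_crit :: "nat \<Rightarrow> real \<Rightarrow> ('c \<Rightarrow> real \<times> real) \<Rightarrow> 'c \<Rightarrow> real \<times> real" where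
  "reduced_crit i \<theta> F C =
     (if i = 1 then (fst (F C), \<theta> * fst (F C) + (1 - \<theta>) * snd (F C))
      else (\<theta> * snd (F C) + (1 - \<theta>) * fst (F C), snd (F C)))"

definition reduced_pareto_set :: "nat \<Rightarrow> real \<Rightarrow> ('c \<Rightarrow> real \<times> real) \<Rightarrow> 'c set \<Rightarrow> (real \<times> real) set" where
  "reduced_pareto_set i \<theta> F Cs = F ` pareto_tours (reduced_crit i \<theta> F) Cs"

end

theory Submission
  imports Defs
begin

lemma exists_below:
  fixes R :: "'c \<Rightarrow> real \<times> real"
  assumes fin: "finite T" and C: "C \<in> T"
  shows "\<exists>C0\<in>pareto_tours R T. fst (R C0) \<le> fst (R C) \<and> snd (R C0) \<le> snd (R C)"
proof -
  define S where "S = {C'\<in>T. fst (R C') \<le> fst (R C) \<and> snd (R C') \<le> snd (R C)}"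
  define g where "g C' = fst (R C') + snd (R C')" for C'
  have finS: "finite (g ` S)" using fin unfolding S_def by auto
  have neS: "g ` S \<noteq> {}" using C unfolding S_def by auto
  obtain C0 where C0: "C0 \<in> S" "g C0 = Min (g ` S)" using Min_in[OF finS neS] by auto
  have min: "g C0 \<le> g C'" if "C' \<in> S" for C' using C0 Min_le[OF finS] that by auto
  have "C0 \<in> pareto_tours R T"
    unfolding pareto_tours_def
  proof (safe)
    show "C0 \<in> T" using C0 S_def by auto
  next
    fix C' assume "C' \<in> T" "pareto_le (R C') (R C0)"
    then have h: "R C' \<noteq> R C0" "fst (R C') \<le> fst (R C0)" "snd (R C') \<le> snd (R C0)"
      unfolding pareto_le_def by auto
    then have "C' \<in> S" using C0(1) \<open>C' \<in> T\<close> unfolding S_def by auto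
    then have "g C0 \<le> g C'" by (rule min)
    moreover have "fst (R C') \<noteq> fst (R C0) \<or> snd (R C') \<noteq> snd (R C0)"
      using h(1) by (metis prod.expand)
    ultimately show False using h unfolding g_def by linarith
  qed
  then show ?thesis using C0(1) S_def by auto
qed

lemma F1:
  fixes F :: "'c \<Rightarrow> real \<times> real"
  assumes th: "0 < \<theta>" "\<theta> < 1" and C: "C \<in> pareto_tours (reduced_crit 2 \<theta> F) T"
  shows "C \<in> pareto_tours F T"
  unfolding pareto_tours_def
proof (safe)
  show "C \<in> T" using C unfolding pareto_tours_def by auto
next
  fix C' assume C': "C' \<in> T" "pareto_le (F C') (F C)"
  then have h: "F C' \<noteq> F C" "fst (F C') \<le> fst (F C)" "snd (F C') \<le> snd (F C)"
    unfolding pareto_le_def by auto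
  have ne: "fst (F C') \<noteq> fst (F C) \<or> snd (F C') \<noteq> snd (F C)"
    using h(1) by (metis prod.expand)
  have m: "(1-\<theta>) * fst (F C') \<le> (1-\<theta>) * fst (F C)" using h th by simp
  have m2: "\<theta> * snd (F C') \<le> \<theta> * snd (F C)" using h th by simp
  have sm: "\<theta> * snd (F C') + (1-\<theta>) * fst (F C') \<le> \<theta> * snd (F C) + (1-\<theta>) * fst (F C)"
    using m m2 by linarith
  have "pareto_le (reduced_crit 2 \<theta> F C') (reduced_crit 2 \<theta> F C)"
    unfolding pareto_le_def reduced_crit_def using h sm ne th by auto
  then show False using C C' unfolding pareto_tours_def by auto
qed

lemma main_gen:
  fixes F :: "'c \<Rightarrow> real \<times> real" and T :: "'c set" and a k \<theta> :: real
  assumes fin: "finite T" and ne: "T \<noteq> {}" and k: "k > 0" and th: "0 < \<theta>" "\<theta> < 1"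
    and line: "\<And>y. y \<in> pareto_set (F ` T) \<Longrightarrow> snd y = a - k * fst y"
  shows "(\<theta> \<ge> 1 / (k + 1) \<longrightarrow> (\<exists>y. reduced_pareto_set 2 \<theta> F T = {y}))
       \<and> (\<theta> < 1 / (k + 1) \<longrightarrow> reduced_pareto_set 2 \<theta> F T = pareto_set (F ` T))"
proof -
  define R where "R = reduced_crit 2 \<theta> F"
  have Rfst: "fst (R C) = \<theta> * snd (F C) + (1-\<theta>) * fst (F C)" for C
    unfolding R_def reduced_crit_def by simp
  have Rsnd: "snd (R C) = snd (F C)" for C unfolding R_def reduced_crit_def by simp
  define RT where "RT = pareto_tours R T"
  define PT where "PT = pareto_tours F T"
  have RTPT: "RT \<subseteq> PT" unfolding RT_def PT_def R_def using F1[OF th, of _ F T] by (rule subsetI)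
  have PS: "pareto_set (F ` T) = F ` PT" unfolding pareto_set_def PT_def pareto_tours_def by auto
  have lineC: "snd (F C) = a - k * fst (F C)" if "C \<in> PT" for C
    using line PS that by auto
  have RPS: "reduced_pareto_set 2 \<theta> F T = F ` RT"
    unfolding reduced_pareto_set_def RT_def R_def by simp
  have PTT: "PT \<subseteq> T" unfolding PT_def pareto_tours_def by auto
  have RTT: "RT \<subseteq> T" unfolding RT_def pareto_tours_def by auto
  obtain C1 where "C1 \<in> T" using ne by auto
  then obtain C0 where C0: "C0 \<in> RT" using exists_below[OF fin] unfolding RT_def by blast
  have k1: "k + 1 > 0" using k by simp
  have P1: "\<exists>y. reduced_pareto_set 2 \<theta> F T = {y}" if ge: "\<theta> \<ge> 1 / (k + 1)"
  proof -
    have c: "1 - \<theta> - \<theta> * k \<le> 0" using ge k1 by (simp add: field_simps)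
    have finP: "finite (fst ` F ` PT)" using fin PTT finite_subset by blast
    have neP: "fst ` F ` PT \<noteq> {}" using C0 RTPT by auto
    obtain Cs where Cs: "Cs \<in> PT" "fst (F Cs) = Max (fst ` F ` PT)" using Max_in[OF finP neP] by auto
    have mx: "fst (F C) \<le> fst (F Cs)" if "C \<in> PT" for C using Cs Max_ge[OF finP] that by auto
    have "F C = F Cs" if C: "C \<in> RT" for C
    proof (rule ccontr)
      assume neq: "F C \<noteq> F Cs"
      have CP: "C \<in> PT" using C RTPT by auto
      have l1: "snd (F C) = a - k * fst (F C)" using lineC CP by auto
      have l2: "snd (F Cs) = a - k * fst (F Cs)" using lineC Cs by auto
      have lt: "fst (F C) < fst (F Cs)"
        using mx[OF CP] neq l1 l2 by (metis order_le_less prod.expand)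
      have e1: "fst (R C) = \<theta> * a + (1 - \<theta> - \<theta> * k) * fst (F C)"
        unfolding Rfst l1 by (simp add: algebra_simps)
      have e2: "fst (R Cs) = \<theta> * a + (1 - \<theta> - \<theta> * k) * fst (F Cs)"
        unfolding Rfst l2 by (simp add: algebra_simps)
      have "(1 - \<theta> - \<theta> * k) * fst (F Cs) \<le> (1 - \<theta> - \<theta> * k) * fst (F C)"
        using c lt by (simp add: mult_left_mono_neg)
      then have f: "fst (R Cs) \<le> fst (R C)" using e1 e2 by simp
      have "k * fst (F C) < k * fst (F Cs)" using k lt by simp
      then have s: "snd (R Cs) < snd (R C)" using Rsnd l1 l2 by simp
      have "pareto_le (R Cs) (R C)" unfolding pareto_le_def using f s by auto
      then show False using C Cs PTT unfolding RT_def pareto_tours_def by auto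
    qed
    then have "F ` RT = {F Cs}" using C0 by auto
    then show ?thesis using RPS by auto
  qed
  have P2: "reduced_pareto_set 2 \<theta> F T = pareto_set (F ` T)" if lt: "\<theta> < 1 / (k + 1)"
  proof -
    have c: "1 - \<theta> - \<theta> * k > 0" using lt k1 by (simp add: field_simps)
    have "PT \<subseteq> RT"
    proof
      fix C assume CP: "C \<in> PT"
      show "C \<in> RT"
      proof (rule ccontr)
        assume "C \<notin> RT"
        then obtain C' where C': "C' \<in> T" "pareto_le (R C') (R C)"
          using CP PTT unfolding RT_def pareto_tours_def by auto
        obtain D where D: "D \<in> RT" "fst (R D) \<le> fst (R C')" "snd (R D) \<le> snd (R C')"
          using exists_below[OF fin C'(1)] unfolding RT_def by blast
        have h: "R C' \<noteq> R C" "fst (R C') \<le> fst (R C)" "snd (R C') \<le> snd (R C)"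
          using C'(2) unfolding pareto_le_def by auto
        have ne: "fst (R C') \<noteq> fst (R C) \<or> snd (R C') \<noteq> snd (R C)"
          using h(1) by (metis prod.expand)
        have DP: "D \<in> PT" using D RTPT by auto
        have l1: "snd (F C) = a - k * fst (F C)" using lineC CP by auto
        have l2: "snd (F D) = a - k * fst (F D)" using lineC DP by auto
        have e1: "fst (R C) = \<theta> * a + (1 - \<theta> - \<theta> * k) * fst (F C)"
          unfolding Rfst l1 by (simp add: algebra_simps)
        have e2: "fst (R D) = \<theta> * a + (1 - \<theta> - \<theta> * k) * fst (F D)"
          unfolding Rfst l2 by (simp add: algebra_simps)
        have "(1 - \<theta> - \<theta> * k) * fst (F D) \<le> (1 - \<theta> - \<theta> * k) * fst (F C)"
          using e1 e2 D h by linarith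
        then have u1: "fst (F D) \<le> fst (F C)" using c by simp
        have "k * fst (F C) \<le> k * fst (F D)" using Rsnd l1 l2 D h by simp
        then have u2: "fst (F C) \<le> fst (F D)" using k by simp
        have "fst (F C) = fst (F D)" using u1 u2 by simp
        then have "fst (R C) = fst (R D)" "snd (R C) = snd (R D)" using e1 e2 Rsnd l1 l2 by auto
        then show False using D h ne by linarith
      qed
    qed
    then show ?thesis using RPS PS RTPT by auto
  qed
  show ?thesis using P1 P2 by blast
qed

lemma tours_finite: "finite (tours n)"
proof (rule finite_subset)
  show "tours n \<subseteq> Pow ({..<n} \<times> {..<n})"
  proof
    fix C assume "C \<in> tours n"
    then obtain vs where vs: "C = set (cyc_arcs vs)" "set vs = {..<n}"
      unfolding tours_def by auto
    have "set (cyc_arcs vs) \<subseteq> set vs \<times> set vs"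
    proof (cases vs)
      case Nil then show ?thesis by (simp add: cyc_arcs_def)
    next
      case (Cons x xs)
      then show ?thesis unfolding cyc_arcs_def
        by (auto dest: set_zip_leftD set_zip_rightD)
    qed
    then show "C \<in> Pow ({..<n} \<times> {..<n})" using vs by auto
  qed
qed simp

lemma tours_ne: "tours n \<noteq> {}"
proof -
  have "set (cyc_arcs [0..<n]) \<in> tours n" unfolding tours_def by auto
  then show ?thesis by auto
qed

theorem theorem3:
  fixes n :: nat and d :: "nat \<times> nat \<Rightarrow> real \<times> real" and a k \<theta> :: real
  assumes "n \<ge> 2"
    and "\<forall>u<n. \<forall>v<n. u \<noteq> v \<longrightarrow> fst (d (u, v)) > 0 \<and> snd (d (u, v)) > 0"
    and "a > 0" and "k > 0"
    and "0 < \<theta>" and "\<theta> < 1"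
    and "pareto_set (Dvec d ` tours n) =
           {(y1, y2). y2 = a - k * y1 \<and> y1 \<in> (fst \<circ> Dvec d) ` tours n
                                     \<and> y2 \<in> (snd \<circ> Dvec d) ` tours n}"
  shows "(\<theta> \<ge> 1 / (k + 1) \<longrightarrow> (\<exists>y. reduced_pareto_set 2 \<theta> (Dvec d) (tours n) = {y}))
       \<and> (\<theta> < 1 / (k + 1) \<longrightarrow> reduced_pareto_set 2 \<theta> (Dvec d) (tours n) = pareto_set (Dvec d ` tours n))"
proof (rule main_gen[OF tours_finite tours_ne assms(4) assms(5) assms(6)])
  fix y assume "y \<in> pareto_set (Dvec d ` tours n)"
  then show "snd y = a - k * fst y" using assms(7) by auto
qed

end
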